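(* Let $z,r$ be real with $z^2+r^2\le1$ and $\rho=\frac12\begin{pmatrix}1+z&r\\ r&1-z\end{pmatrix}$. A state of the form $\rho'=\frac12\begin{pmatrix}1+z'&r'\\ r'&1-z'\end{pmatrix}$ with $z',r'$ real can be obtained as $\rho'=\Lambda(\rho)$ for some physically incoherent operation (PIO) $\Lambda$ on a qubit if and only if the point $(z',r')\in\mathbb{R}^2$ lies in the convex hull of the six points $(z,r),(z,-r),(-z,r),(-z,-r),(1,0),(-1,0)$.
   Context: $\{|0\rangle,|1\rangle\}$ is the computational basis of $\mathbb{C}^2$. A physically incoherent operation (PIO) is a convex combination of channels each having Kraus operators of the form $K_n=U_nP_n$, where $U_n=\sum_i e^{i\theta_{ni}}|\pi_n(i)\rangle\langle i|$ ($\pi_n$ a permutation of $\{0,1\}$, $\theta_{ni}$ real) and $\{P_n\}$ is a complete set of mutually orthogonal diagonal projectors (for a qubit: $\{|0\rangle\langle0|,|1\rangle\langle1|\}$ or $\{I\}$). *)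

theory Defs
  imports "HOL-Analysis.Analysis"
begin

type_synonym qmat = "complex^2^2"

definition adj :: "qmat \<Rightarrow> qmat" where
  "adj A = (\<chi> i j. cnj (A $ j $ i))"

definition phase_perm :: "qmat \<Rightarrow> bool" where
  "phase_perm U \<longleftrightarrow> (\<exists>(\<pi>::2 \<Rightarrow> 2) (\<theta>::2 \<Rightarrow> real). bij \<pi> \<and>
      U = (\<chi> i j. if i = \<pi> j then cis (\<theta> j) else 0))"

definition diag_proj :: "qmat \<Rightarrow> bool" where
  "diag_proj P \<longleftrightarrow> (\<forall>i j. i \<noteq> j \<longrightarrow> P $ i $ j = 0) \<and> (\<forall>i. P $ i $ i = 0 \<or> P $ i $ i = 1)"

definition pio_kraus :: "qmat list \<Rightarrow> bool" where
  "pio_kraus Ks \<longleftrightarrow> (\<exists>Us Ps. length Us = length Ks \<and> length Ps = length Ks \<and>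
     (\<forall>n<length Ks. phase_perm (Us ! n) \<and> diag_proj (Ps ! n) \<and> Ks ! n = Us ! n ** Ps ! n) \<and>
     (\<forall>m<length Ks. \<forall>n<length Ks. m \<noteq> n \<longrightarrow> Ps ! m ** Ps ! n = 0) \<and>
     sum_list Ps = mat 1)"

definition kraus_apply :: "qmat list \<Rightarrow> qmat \<Rightarrow> qmat" where
  "kraus_apply Ks \<rho> = sum_list (map (\<lambda>K. K ** \<rho> ** adj K) Ks)"

definition is_PIO :: "(qmat \<Rightarrow> qmat) \<Rightarrow> bool" where
  "is_PIO \<Lambda> \<longleftrightarrow> (\<exists>cs :: (real \<times> qmat list) list.
      (\<forall>(p, Ks) \<in> set cs. p \<ge> 0 \<and> pio_kraus Ks) \<and> sum_list (map fst cs) = 1 \<and>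
      (\<forall>\<rho>. \<Lambda> \<rho> = sum_list (map (\<lambda>(p, Ks). p *\<^sub>R kraus_apply Ks \<rho>) cs)))"

definition qstate :: "real \<Rightarrow> real \<Rightarrow> qmat" where
  "qstate z r = (\<chi> i j. if i = j then (if i = 0 then complex_of_real ((1 + z) / 2)
                                       else complex_of_real ((1 - z) / 2))
                      else complex_of_real (r / 2))"

end

theory Submission imports Defs begin
lemma two0: "(2::2) = 0" by simp
lemma UNIV2: "(UNIV::2 set) = {0,1}" using UNIV_2 two0 by auto
lemma sum2: "sum f (UNIV::2 set) = f 0 + f 1" by (simp add: UNIV2)
lemma all2: "(\<forall>i::2. P i) \<longleftrightarrow> P 0 \<and> P 1" by (metis UNIV2 UNIV_I insertE singletonD)

definition Uid :: "real \<Rightarrow> real \<Rightarrow> qmat" where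
 "Uid t0 t1 = (\<chi> i j. if i = j then cis (if j = 0 then t0 else t1) else 0)"
definition Usw :: "real \<Rightarrow> real \<Rightarrow> qmat" where
 "Usw t0 t1 = (\<chi> i j. if i \<noteq> j then cis (if j = 0 then t0 else t1) else 0)"
definition Pd :: "real \<Rightarrow> real \<Rightarrow> qmat" where
 "Pd a b = (\<chi> i j. if i = j then complex_of_real (if i = 0 then a else b) else 0)"
definition ff :: "qmat \<Rightarrow> real \<times> real" where
 "ff A = (Re (A$0$0 - A$1$1), 2 * Re (A$0$1))"

lemma T_id: "ff ((Uid t0 t1 ** Pd a b) ** qstate z r ** adj (Uid t0 t1 ** Pd a b))
   = (a^2*(1+z)/2 - b^2*(1-z)/2, a*b*r*cos(t0-t1))"
  apply (simp add: ff_def Uid_def Pd_def qstate_def adj_def matrix_matrix_mult_def sum2 cis_cnj)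
  apply (simp add: cos_diff)
  apply (rule conjI)
  subgoal proof -
    have "cos t * x * y * (cos t * x) + sin t * x * y * (sin t * x) = x^2 * y" for t x y :: real
    proof -
      have "cos t * x * y * (cos t * x) + sin t * x * y * (sin t * x) = x^2 * y * ((cos t)^2 + (sin t)^2)"
        by algebra
      then show ?thesis by simp
    qed
    then show ?thesis by (simp add: diff_divide_distrib)
  qed
  by (simp add: algebra_simps)
lemma T_sw: "ff ((Usw t0 t1 ** Pd a b) ** qstate z r ** adj (Usw t0 t1 ** Pd a b))
   = (b^2*(1-z)/2 - a^2*(1+z)/2, a*b*r*cos(t1-t0))"
  apply (simp add: ff_def Usw_def Pd_def qstate_def adj_def matrix_matrix_mult_def sum2 cis_cnj)
  apply (simp add: cos_diff)
  apply (rule conjI)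
  subgoal proof -
    have "cos t * x * y * (cos t * x) + sin t * x * y * (sin t * x) = x^2 * y" for t x y :: real
    proof -
      have "cos t * x * y * (cos t * x) + sin t * x * y * (sin t * x) = x^2 * y * ((cos t)^2 + (sin t)^2)"
        by algebra
      then show ?thesis by simp
    qed
    then show ?thesis by (simp add: diff_divide_distrib)
  qed
  by (simp add: algebra_simps)

lemma T_id': "a \<in> {0,1} \<Longrightarrow> b \<in> {0,1} \<Longrightarrow> ff ((Uid t0 t1 ** Pd a b) ** qstate z r ** adj (Uid t0 t1 ** Pd a b))
   = (1*(a*(1+z) - b*(1-z))/2, a*b*r*cos(t0-t1))"
  unfolding T_id by (auto simp: power2_eq_square)
lemma T_sw': "a \<in> {0,1} \<Longrightarrow> b \<in> {0,1} \<Longrightarrow> ff ((Usw t0 t1 ** Pd a b) ** qstate z r ** adj (Usw t0 t1 ** Pd a b))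
   = ((-1)*(a*(1+z) - b*(1-z))/2, a*b*r*cos(t1-t0))"
  unfolding T_sw by (auto simp: power2_eq_square)

lemma ex2: "(\<exists>i::2. P i) \<longleftrightarrow> P 0 \<or> P 1" by (metis UNIV2 UNIV_I insertE singletonD)

lemma phase_perm_cases:
  assumes "phase_perm U" shows "\<exists>t0 t1. U = Uid t0 t1 \<or> U = Usw t0 t1"
proof -
  obtain \<pi> :: "2\<Rightarrow>2" and \<theta> where b: "bij \<pi>" and U: "U = (\<chi> i j. if i = \<pi> j then cis (\<theta> j) else 0)"
    using assms unfolding phase_perm_def by blast
  have ne: "\<pi> 0 \<noteq> \<pi> 1" using b unfolding bij_def inj_def by (metis zero_neq_one)
  have c: "x = 0 \<or> x = 1" for x :: 2 using UNIV2 by auto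
  show ?thesis
  proof (cases "\<pi> 0 = 0")
    case True
    then have "\<pi> 1 = 1" using ne c by metis
    then have "U = Uid (\<theta> 0) (\<theta> 1)" using True unfolding U Uid_def
      by (simp add: vec_eq_iff all2)
    then show ?thesis by blast
  next
    case False
    then have "\<pi> 0 = 1" "\<pi> 1 = 0" using ne c by metis+
    then have "U = Usw (\<theta> 0) (\<theta> 1)" unfolding U Usw_def
      by (simp add: vec_eq_iff all2)
    then show ?thesis by blast
  qed
qed

lemma diag_proj_cases:
  assumes "diag_proj P" shows "\<exists>a b. a \<in> {0,1} \<and> b \<in> {0,1} \<and> P = Pd a b"
proof -
  have off: "P$0$1 = 0" "P$1$0 = 0" and d: "P$0$0 = 0 \<or> P$0$0 = 1" "P$1$1 = 0 \<or> P$1$1 = 1"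
    using assms unfolding diag_proj_def by auto
  define a where "a = Re (P$0$0)"
  define b where "b = Re (P$1$1)"
  have "a \<in> {0,1}" "b \<in> {0,1}" using d by (auto simp: a_def b_def)
  moreover have "P = Pd a b" using off d unfolding Pd_def a_def b_def
    by (auto simp: vec_eq_iff all2)
  ultimately show ?thesis by blast
qed

lemma phase_perm_Uid: "phase_perm (Uid t0 t1)"
  unfolding phase_perm_def Uid_def
  by (rule exI[of _ id], rule exI[of _ "\<lambda>j. if j = 0 then t0 else t1"]) simp

lemma phase_perm_Usw: "phase_perm (Usw t0 t1)"
proof -
  define \<pi> :: "2\<Rightarrow>2" where "\<pi> = (\<lambda>j. if j = 0 then 1 else 0)"
  have b: "bij \<pi>" unfolding bij_def inj_def surj_def \<pi>_def by (auto simp: all2 ex2)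
  have e: "Usw t0 t1 = (\<chi> i j. if i = \<pi> j then cis ((\<lambda>j. if j = 0 then t0 else t1) j) else 0)"
    unfolding Usw_def \<pi>_def by (simp add: vec_eq_iff all2)
  show ?thesis unfolding phase_perm_def
    apply (rule exI[of _ \<pi>], rule exI[of _ "\<lambda>j. if j = 0 then t0 else t1"])
    using b e by simp
qed

lemma diag_Pd: "a \<in> {0,1} \<Longrightarrow> b \<in> {0,1} \<Longrightarrow> diag_proj (Pd a b)"
  unfolding diag_proj_def Pd_def by (auto simp: all2)

lemma Pd11: "Pd 1 1 = mat 1" unfolding Pd_def mat_def by (simp add: vec_eq_iff all2)

lemma pio1: "phase_perm U \<Longrightarrow> pio_kraus [U ** Pd 1 1]"
  unfolding pio_kraus_def
  by (rule exI[of _ "[U]"], rule exI[of _ "[Pd 1 1]"]) (simp add: diag_Pd[of 1 1, simplified Pd11] Pd11)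

lemma all_lt2: "(\<forall>n<Suc (Suc 0). P n) \<longleftrightarrow> P 0 \<and> P 1"
  by (auto simp: less_Suc_eq)

lemma pio2: "phase_perm U \<Longrightarrow> phase_perm V \<Longrightarrow> pio_kraus [U ** Pd 1 0, V ** Pd 0 1]"
  unfolding pio_kraus_def
  apply (rule exI[of _ "[U,V]"], rule exI[of _ "[Pd 1 0, Pd 0 1]"])
  apply (simp add: all_lt2 diag_Pd)
  apply (simp add: Pd_def matrix_matrix_mult_def sum2 vec_eq_iff all2 mat_def)
  done

lemma chan: "pio_kraus Ks \<Longrightarrow> is_PIO (kraus_apply Ks)"
  unfolding is_PIO_def by (rule exI[of _ "[(1,Ks)]"]) simp

lemma c1: "kraus_apply [Uid 0 0 ** Pd 1 1] (qstate z r) = qstate z r"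
  by (simp add: kraus_apply_def Uid_def Pd_def qstate_def adj_def matrix_matrix_mult_def sum2 vec_eq_iff all2)
lemma c2: "kraus_apply [Uid 0 pi ** Pd 1 1] (qstate z r) = qstate z (-r)"
  by (simp add: kraus_apply_def Uid_def Pd_def qstate_def adj_def matrix_matrix_mult_def sum2 vec_eq_iff all2 field_simps)
lemma c3: "kraus_apply [Usw 0 0 ** Pd 1 1] (qstate z r) = qstate (-z) r"
  by (simp add: kraus_apply_def Usw_def Pd_def qstate_def adj_def matrix_matrix_mult_def sum2 vec_eq_iff all2 field_simps)
lemma c4: "kraus_apply [Usw 0 pi ** Pd 1 1] (qstate z r) = qstate (-z) (-r)"
  by (simp add: kraus_apply_def Usw_def Pd_def qstate_def adj_def matrix_matrix_mult_def sum2 vec_eq_iff all2 field_simps)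
lemma c5: "kraus_apply [Uid 0 0 ** Pd 1 0, Usw 0 0 ** Pd 0 1] (qstate z r) = qstate 1 0"
  by (simp add: kraus_apply_def Uid_def Usw_def Pd_def qstate_def adj_def matrix_matrix_mult_def sum2 vec_eq_iff all2 field_simps)
lemma c6: "kraus_apply [Usw 0 0 ** Pd 1 0, Uid 0 0 ** Pd 0 1] (qstate z r) = qstate (-1) 0"
  by (simp add: kraus_apply_def Uid_def Usw_def Pd_def qstate_def adj_def matrix_matrix_mult_def sum2 vec_eq_iff all2 field_simps)

lemma sum_fst_scale: "sum_list (map fst (map (\<lambda>(p, K). (c * p, K)) (xs :: (real \<times> 'a) list))) = c * sum_list (map fst xs)"
  by (induction xs) (auto simp: algebra_simps)

lemma sum_scale: fixes F :: "'a \<Rightarrow> qmat" and c :: real shows "sum_list (map (\<lambda>(p, Ks). p *\<^sub>R F Ks) (map (\<lambda>(p, K). (c * p, K)) xs))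
   = c *\<^sub>R sum_list (map (\<lambda>(p, Ks). p *\<^sub>R F Ks) xs)"
  by (induction xs) (auto simp: scaleR_add_right)

lemma qstate_comb: assumes uv: "u + v = 1" shows "u *\<^sub>R qstate a1 b1 + v *\<^sub>R qstate a2 b2 = qstate (u * a1 + v * a2) (u * b1 + v * b2)"
proof -
  from uv have v: "v = 1 - u" by simp
  show ?thesis unfolding qstate_def v
    by (auto simp: vec_eq_iff all2 complex_eq_iff field_simps)
qed

lemma PIO_comb:
  assumes "is_PIO L1" "is_PIO L2" "u \<ge> 0" "v \<ge> 0" "u + v = 1"
  shows "is_PIO (\<lambda>\<rho>. u *\<^sub>R L1 \<rho> + v *\<^sub>R L2 \<rho>)"
proof -
  obtain cs1 where c1: "\<forall>(p, Ks) \<in> set cs1. p \<ge> 0 \<and> pio_kraus Ks" "sum_list (map fst cs1) = 1"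
      "\<forall>\<rho>. L1 \<rho> = sum_list (map (\<lambda>(p, Ks). p *\<^sub>R kraus_apply Ks \<rho>) cs1)"
    using assms(1) unfolding is_PIO_def by blast
  obtain cs2 where c2: "\<forall>(p, Ks) \<in> set cs2. p \<ge> 0 \<and> pio_kraus Ks" "sum_list (map fst cs2) = 1"
      "\<forall>\<rho>. L2 \<rho> = sum_list (map (\<lambda>(p, Ks). p *\<^sub>R kraus_apply Ks \<rho>) cs2)"
    using assms(2) unfolding is_PIO_def by blast
  define cs where "cs = map (\<lambda>(p, K). (u * p, K)) cs1 @ map (\<lambda>(p, K). (v * p, K)) cs2"
  have "\<forall>(p, Ks) \<in> set cs. p \<ge> 0 \<and> pio_kraus Ks"
    using c1(1) c2(1) assms(3,4) unfolding cs_def by auto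
  moreover have "sum_list (map fst cs) = 1"
    unfolding cs_def map_append sum_list_append sum_fst_scale using c1(2) c2(2) assms(5) by simp
  moreover have "\<forall>\<rho>. u *\<^sub>R L1 \<rho> + v *\<^sub>R L2 \<rho> = sum_list (map (\<lambda>(p, Ks). p *\<^sub>R kraus_apply Ks \<rho>) cs)"
    unfolding cs_def map_append sum_list_append sum_scale using c1(3) c2(3) by simp
  ultimately show ?thesis unfolding is_PIO_def by blast
qed

lemma reach_convex: "convex {p. \<exists>\<Lambda>. is_PIO \<Lambda> \<and> \<Lambda> (qstate z r) = qstate (fst p) (snd p)}"
proof (rule convexI)
  fix x y :: "real \<times> real" and u v :: real
  assume x: "x \<in> {p. \<exists>\<Lambda>. is_PIO \<Lambda> \<and> \<Lambda> (qstate z r) = qstate (fst p) (snd p)}"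
    and y: "y \<in> {p. \<exists>\<Lambda>. is_PIO \<Lambda> \<and> \<Lambda> (qstate z r) = qstate (fst p) (snd p)}"
    and uv: "0 \<le> u" "0 \<le> v" "u + v = 1"
  obtain L1 where L1: "is_PIO L1" "L1 (qstate z r) = qstate (fst x) (snd x)" using x by auto
  obtain L2 where L2: "is_PIO L2" "L2 (qstate z r) = qstate (fst y) (snd y)" using y by auto
  have "is_PIO (\<lambda>\<rho>. u *\<^sub>R L1 \<rho> + v *\<^sub>R L2 \<rho>)" using PIO_comb L1(1) L2(1) uv by blast
  moreover have "u *\<^sub>R L1 (qstate z r) + v *\<^sub>R L2 (qstate z r) = qstate (fst (u *\<^sub>R x + v *\<^sub>R y)) (snd (u *\<^sub>R x + v *\<^sub>R y))"
    using L1(2) L2(2) qstate_comb[OF uv(3)] by simp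
  ultimately show "u *\<^sub>R x + v *\<^sub>R y \<in> {p. \<exists>\<Lambda>. is_PIO \<Lambda> \<and> \<Lambda> (qstate z r) = qstate (fst p) (snd p)}"
    by blast
qed

lemma backward:
  assumes "(z', r') \<in> convex hull {(z, r), (z, -r), (-z, r), (-z, -r), (1, 0), (-1, 0)}"
  shows "\<exists>\<Lambda>. is_PIO \<Lambda> \<and> \<Lambda> (qstate z r) = qstate z' r'"
proof -
  let ?R = "{p. \<exists>\<Lambda>. is_PIO \<Lambda> \<and> \<Lambda> (qstate z r) = qstate (fst p) (snd p)}"
  have "{(z, r), (z, -r), (-z, r), (-z, -r), (1, 0), (-1, 0)} \<subseteq> ?R"
    using chan[OF pio1[OF phase_perm_Uid], of 0 0] c1[of z r]
      chan[OF pio1[OF phase_perm_Uid], of 0 pi] c2[of z r]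
      chan[OF pio1[OF phase_perm_Usw], of 0 0] c3[of z r]
      chan[OF pio1[OF phase_perm_Usw], of 0 pi] c4[of z r]
      chan[OF pio2[OF phase_perm_Uid phase_perm_Usw], of 0 0 0 0] c5[of z r]
      chan[OF pio2[OF phase_perm_Usw phase_perm_Uid], of 0 0 0 0] c6[of z r]
    by auto
  then have "convex hull {(z, r), (z, -r), (-z, r), (-z, -r), (1, 0), (-1, 0)} \<subseteq> ?R"
    by (rule hull_minimal) (rule reach_convex)
  from subsetD[OF this assms] show ?thesis by simp
qed

lemma ff_add: "ff (A + B) = ff A + ff B" by (simp add: ff_def)
lemma ff_zero: "ff 0 = 0" by (simp add: ff_def zero_prod_def)
lemma ff_scale: "ff (c *\<^sub>R A) = c *\<^sub>R ff A" by (simp add: ff_def algebra_simps)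
lemma ff_sum_list: "ff (sum_list ys) = sum_list (map ff ys)"
  by (induction ys) (simp_all add: ff_add ff_zero)
lemma ff_qstate: "ff (qstate a b) = (a, b)" by (simp add: ff_def qstate_def field_simps)

lemma one_hot:
  fixes a :: "nat \<Rightarrow> real"
  assumes "finite I" "\<forall>n\<in>I. a n \<in> {0,1}" "sum a I = 1"
  shows "\<exists>n0\<in>I. a n0 = 1 \<and> (\<forall>n\<in>I. n \<noteq> n0 \<longrightarrow> a n = 0)"
proof -
  have "\<exists>n0\<in>I. a n0 \<noteq> 0"
  proof (rule ccontr)
    assume "\<not> ?thesis" then have "sum a I = 0" by simp
    then show False using assms(3) by simp
  qed
  then obtain n0 where n0: "n0 \<in> I" "a n0 = 1" using assms(2) by auto
  have "\<forall>n\<in>I. n \<noteq> n0 \<longrightarrow> a n = 0"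
  proof (intro ballI impI, rule ccontr)
    fix n assume n: "n \<in> I" "n \<noteq> n0" "a n \<noteq> 0"
    then have an: "a n = 1" using assms(2) by auto
    have "sum a {n0, n} \<le> sum a I"
      by (rule sum_mono2) (use assms n n0 in auto)
    then show False using an n0 n assms(3) by simp
  qed
  then show ?thesis using n0 by blast
qed

lemma sum_single:
  fixes a g :: "nat \<Rightarrow> real"
  assumes "finite I" "n0 \<in> I" "\<forall>n\<in>I. n \<noteq> n0 \<longrightarrow> a n = 0" "a n0 = 1"
  shows "(\<Sum>n\<in>I. a n * g n) = g n0"
proof -
  have "(\<Sum>n\<in>I. a n * g n) = a n0 * g n0 + (\<Sum>n\<in>I - {n0}. a n * g n)"
    using sum.remove[OF assms(1,2)] by blast
  also have "(\<Sum>n\<in>I - {n0}. a n * g n) = 0" using assms(3) by (intro sum.neutral) auto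
  finally show ?thesis using assms(4) by simp
qed

abbreviation H6 :: "real \<Rightarrow> real \<Rightarrow> (real \<times> real) set" where
  "H6 z r \<equiv> convex hull {(z, r), (z, -r), (-z, r), (-z, -r), (1, 0), (-1, 0)}"

lemma hull_pt1:
  assumes "s \<in> {-1, 1}" "\<bar>c\<bar> \<le> 1"
  shows "(s * z, r * c) \<in> H6 z r"
proof -
  have p: "(s*z, r) \<in> H6 z r" "(s*z, -r) \<in> H6 z r" using assms(1) by (auto intro: hull_inc)
  have "((1+c)/2) *\<^sub>R (s*z, r) + ((1-c)/2) *\<^sub>R (s*z, -r) \<in> H6 z r"
    by (rule convexD[OF convex_convex_hull p]) (use assms(2) in \<open>auto simp: field_simps abs_le_iff\<close>)
  moreover have "((1+c)/2) *\<^sub>R (s*z, r) + ((1-c)/2) *\<^sub>R (s*z, -r) = (s * z, r * c)"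
    by (simp add: field_simps)
  ultimately show ?thesis by simp
qed

lemma kraus_in_hull:
  assumes "pio_kraus Ks"
  shows "ff (kraus_apply Ks (qstate z r)) \<in> H6 z r"
proof -
  define N where "N = length Ks"
  define \<rho> where "\<rho> = qstate z r"
  obtain Us Ps where len: "length Us = N" "length Ps = N"
    and each: "\<forall>n<N. phase_perm (Us ! n) \<and> diag_proj (Ps ! n) \<and> Ks ! n = Us ! n ** Ps ! n"
    and sumP: "sum_list Ps = mat 1"
    using assms unfolding pio_kraus_def N_def by blast
  have ex: "\<forall>n<N. \<exists>a b s c. a \<in> {0,1} \<and> b \<in> {0,1} \<and> s \<in> {-1,1} \<and> \<bar>c\<bar> \<le> 1 \<and> Ps ! n = Pd a b \<and>
      ff (Ks ! n ** \<rho> ** adj (Ks ! n)) = (s * (a*(1+z) - b*(1-z))/2, a*b*r*c)"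
  proof (intro allI impI)
    fix n assume n: "n < N"
    obtain t0 t1 where U: "Us ! n = Uid t0 t1 \<or> Us ! n = Usw t0 t1"
      using phase_perm_cases each n by blast
    obtain a b where ab: "a \<in> {0,1}" "b \<in> {0,1}" "Ps ! n = Pd a b"
      using diag_proj_cases each n by blast
    have K: "Ks ! n = Us ! n ** Pd a b" using each n ab by simp
    show "\<exists>a b s c. a \<in> {0,1} \<and> b \<in> {0,1} \<and> s \<in> {-1,1} \<and> \<bar>c\<bar> \<le> 1 \<and> Ps ! n = Pd a b \<and>
      ff (Ks ! n ** \<rho> ** adj (Ks ! n)) = (s * (a*(1+z) - b*(1-z))/2, a*b*r*c)"
      using U
    proof
      assume "Us ! n = Uid t0 t1"
      then show ?thesis using T_id'[OF ab(1,2), of t0 t1 z r] ab abs_cos_le_one[of "t0 - t1"]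
        unfolding K \<rho>_def by (intro exI[of _ a] exI[of _ b] exI[of _ 1] exI[of _ "cos (t0 - t1)"]) auto
    next
      assume "Us ! n = Usw t0 t1"
      then show ?thesis using T_sw'[OF ab(1,2), of t0 t1 z r] ab abs_cos_le_one[of "t1 - t0"]
        unfolding K \<rho>_def by (intro exI[of _ a] exI[of _ b] exI[of _ "-1"] exI[of _ "cos (t1 - t0)"]) auto
    qed
  qed
  then obtain A B S C where ABSC: "\<forall>n<N. A n \<in> {0,1} \<and> B n \<in> {0,1} \<and> S n \<in> {-1,1} \<and> \<bar>C n\<bar> \<le> 1 \<and> Ps ! n = Pd (A n) (B n) \<and>
      ff (Ks ! n ** \<rho> ** adj (Ks ! n)) = (S n * (A n*(1+z) - B n*(1-z))/2, A n*B n*r*C n)"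
    by metis
  let ?I = "{0..<N}"
  have PsSum: "(\<Sum>n\<in>?I. Pd (A n) (B n)) = mat 1"
  proof -
    have "(\<Sum>n\<in>?I. Pd (A n) (B n)) = (\<Sum>n\<in>?I. Ps ! n)" using ABSC by (intro sum.cong) auto
    also have "... = sum_list Ps" using sum_list_sum_nth[of Ps] len by simp
    finally show ?thesis using sumP by simp
  qed
  have "complex_of_real (\<Sum>n\<in>?I. A n) = 1"
    using arg_cong[OF PsSum, of "\<lambda>M. M $ 0 $ 0"] by (simp add: Pd_def mat_def)
  then have sA: "(\<Sum>n\<in>?I. A n) = 1" by (metis of_real_eq_1_iff)
  have "complex_of_real (\<Sum>n\<in>?I. B n) = 1"
    using arg_cong[OF PsSum, of "\<lambda>M. M $ 1 $ 1"] by (simp add: Pd_def mat_def)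
  then have sB: "(\<Sum>n\<in>?I. B n) = 1" by (metis of_real_eq_1_iff)
  obtain n0 where n0: "n0 \<in> ?I" "A n0 = 1" "\<forall>n\<in>?I. n \<noteq> n0 \<longrightarrow> A n = 0"
    using one_hot[of ?I A] sA ABSC by auto
  obtain n1 where n1: "n1 \<in> ?I" "B n1 = 1" "\<forall>n\<in>?I. n \<noteq> n1 \<longrightarrow> B n = 0"
    using one_hot[of ?I B] sB ABSC by auto
  have "ff (kraus_apply Ks \<rho>) = (\<Sum>n\<in>?I. ff (Ks ! n ** \<rho> ** adj (Ks ! n)))"
    unfolding kraus_apply_def ff_sum_list N_def
    by (subst sum_list_sum_nth) simp
  also have "... = (\<Sum>n\<in>?I. (S n * (A n*(1+z) - B n*(1-z))/2, A n*B n*r*C n))"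
    using ABSC by (intro sum.cong) auto
  finally have fe: "ff (kraus_apply Ks \<rho>) = ((\<Sum>n\<in>?I. S n * (A n*(1+z) - B n*(1-z))/2), (\<Sum>n\<in>?I. A n*B n*r*C n))"
    by (simp add: prod_eq_iff fst_sum snd_sum)
  have "(\<Sum>n\<in>?I. S n * (A n*(1+z) - B n*(1-z))/2) = (\<Sum>n\<in>?I. A n * (S n*(1+z)/2) - B n * (S n*(1-z)/2))"
    by (intro sum.cong refl) (simp add: field_simps)
  also have "... = (\<Sum>n\<in>?I. A n * (S n*(1+z)/2)) - (\<Sum>n\<in>?I. B n * (S n*(1-z)/2))"
    by (rule sum_subtractf)
  also have "... = S n0*(1+z)/2 - S n1*(1-z)/2"
  proof -
    have h1: "(\<Sum>n\<in>?I. A n * (S n*(1+z)/2)) = S n0*(1+z)/2" by (rule sum_single) (use n0 in auto)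
    have h2: "(\<Sum>n\<in>?I. B n * (S n*(1-z)/2)) = S n1*(1-z)/2" by (rule sum_single) (use n1 in auto)
    show ?thesis unfolding h1 h2 by (rule refl)
  qed
  finally have X: "(\<Sum>n\<in>?I. S n * (A n*(1+z) - B n*(1-z))/2) = S n0*(1+z)/2 - S n1*(1-z)/2" .
  have "(\<Sum>n\<in>?I. A n*B n*r*C n) = (\<Sum>n\<in>?I. A n * (B n*r*C n))"
    by (simp add: mult.assoc)
  also have "... = B n0 * r * C n0" using sum_single[of ?I n0 A] n0 by simp
  finally have Y: "(\<Sum>n\<in>?I. A n*B n*r*C n) = B n0 * r * C n0" .
  have Sn0: "S n0 \<in> {-1,1}" "\<bar>C n0\<bar> \<le> 1" "B n0 \<in> {0,1}" using ABSC n0 by auto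
  have Sn1: "S n1 \<in> {-1,1}" using ABSC n1 by auto
  show ?thesis
  proof (cases "B n0 = 1")
    case True
    then have "n1 = n0" using n1(3) n0(1) by force
    then have "ff (kraus_apply Ks \<rho>) = (S n0 * z, r * C n0)"
      using fe X Y True by (simp add: field_simps)
    then show ?thesis using hull_pt1[OF Sn0(1,2)] \<rho>_def by simp
  next
    case False
    then have B0: "B n0 = 0" using Sn0 by auto
    have z0: "(z, 0) \<in> H6 z r" "(-z, 0) \<in> H6 z r" using hull_pt1[of 1 0 z r] hull_pt1[of "-1" 0 z r] by auto
    have o: "(1, 0) \<in> H6 z r" "(-1, 0) \<in> H6 z r" by (auto intro: hull_inc)
    have eq: "ff (kraus_apply Ks \<rho>) = (S n0*(1+z)/2 - S n1*(1-z)/2, 0)"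
      using fe X Y B0 by simp
    have "S n0*(1+z)/2 - S n1*(1-z)/2 \<in> {z, -z, 1, -1}"
      using Sn0(1) Sn1 by (elim insertE emptyE) (simp_all add: field_simps)
    then show ?thesis using eq z0 o \<rho>_def by auto
  qed
qed

theorem mainTheorem6:
  fixes z r z' r' :: real
  assumes "z\<^sup>2 + r\<^sup>2 \<le> 1"
  shows "(\<exists>\<Lambda>. is_PIO \<Lambda> \<and> \<Lambda> (qstate z r) = qstate z' r') \<longleftrightarrow>
         (z', r') \<in> convex hull {(z, r), (z, -r), (-z, r), (-z, -r), (1, 0), (-1, 0)}"
proof
  assume "\<exists>\<Lambda>. is_PIO \<Lambda> \<and> \<Lambda> (qstate z r) = qstate z' r'"
  then obtain L cs where L: "L (qstate z r) = qstate z' r'"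
    and c: "\<forall>(p, Ks) \<in> set cs. p \<ge> 0 \<and> pio_kraus Ks" "sum_list (map fst cs) = 1"
      "\<forall>\<rho>. L \<rho> = sum_list (map (\<lambda>(p, Ks). p *\<^sub>R kraus_apply Ks \<rho>) cs)"
    unfolding is_PIO_def by blast
  let ?I = "{0..<length cs}"
  have csi: "0 \<le> fst (cs ! i) \<and> pio_kraus (snd (cs ! i))" if "i \<in> ?I" for i
  proof -
    have m: "cs ! i \<in> set cs" using that by simp
    obtain p Ks where e: "cs ! i = (p, Ks)" by (cases "cs ! i")
    show ?thesis using c(1) m unfolding e by auto
  qed
  have "(z', r') = ff (L (qstate z r))" using L ff_qstate by simp
  also have "... = (\<Sum>i\<in>?I. fst (cs ! i) *\<^sub>R ff (kraus_apply (snd (cs ! i)) (qstate z r)))"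
    unfolding c(3)[rule_format] ff_sum_list
    by (subst sum_list_sum_nth) (simp add: case_prod_beta ff_scale)
  also have "... \<in> H6 z r"
  proof (rule convex_sum)
    show "(\<Sum>i\<in>?I. fst (cs ! i)) = 1" using c(2) sum_list_sum_nth[of "map fst cs"] by simp
    show "\<And>i. i \<in> ?I \<Longrightarrow> 0 \<le> fst (cs ! i)" using csi by blast
    show "\<And>i. i \<in> ?I \<Longrightarrow> ff (kraus_apply (snd (cs ! i)) (qstate z r)) \<in> H6 z r"
      using csi kraus_in_hull by blast
  qed (rule finite_atLeastLessThan, rule convex_convex_hull)
  finally show "(z', r') \<in> H6 z r" .
next
  assume "(z', r') \<in> convex hull {(z, r), (z, -r), (-z, r), (-z, -r), (1, 0), (-1, 0)}"
  then show "\<exists>\<Lambda>. is_PIO \<Lambda> \<and> \<Lambda> (qstate z r) = qstate z' r'" by (rule backward)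
qed
end
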